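(* Let $n=2k+1$ with $k$ a positive integer, and let $(\Gamma,+)$ be an abelian group of order $n$ with neutral element $e$ such that $\sum_{g\in\Gamma} g = e$ and $2g\neq e$ for all $g\in\Gamma\setminus\{e\}$. Let $p,q$ be two new symbols and let $P_n=(\Gamma\times(\Gamma\setminus\{e\}))\cup\{p,q\}$. Define the lines - $L_g=\{(h,g): h\in\Gamma\}$ for $g\in\Gamma\setminus\{e\}$; - $l_{p_g}=\{(g,h): h\in\Gamma\setminus\{e\}\}\cup\{p\}$ for $g\in\Gamma$; - $l_{q_g}=\{(h,h+g): h\in\Gamma,\ h+g\neq e\}\cup\{q\}$ for $g\in\Gamma$, and let $\mathcal{L}_n$ be the family of all these $3n-1$ lines. Then the linear system $\mathcal{C}_{n,n+1}=(P_n,\mathcal{L}_n)$ satisfies $\tau(\mathcal{C}_{n,n+1})=n+1$.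
   Context: A linear system is a pair $(P,\mathcal{L})$ with $P$ a finite set of points and $\mathcal{L}$ a family of subsets of $P$ (lines) such that any two distinct lines share at most one point. A transversal is a set of points meeting every line; $\tau$ denotes the minimum cardinality of a transversal. *)

theory Defs
  imports Main
begin

definition linear_system :: "'p set \<Rightarrow> 'p set set \<Rightarrow> bool" where
  "linear_system P L \<longleftrightarrow> finite P \<and> (\<forall>l\<in>L. l \<subseteq> P) \<and>
     (\<forall>l1\<in>L. \<forall>l2\<in>L. l1 \<noteq> l2 \<longrightarrow> card (l1 \<inter> l2) \<le> 1)"

definition is_transversal :: "'p set \<Rightarrow> 'p set set \<Rightarrow> 'p set \<Rightarrow> bool" where
  "is_transversal P L T \<longleftrightarrow> T \<subseteq> P \<and> (\<forall>l\<in>L. T \<inter> l \<noteq> {})"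

definition tau :: "'p set \<Rightarrow> 'p set set \<Rightarrow> nat" where
  "tau P L = (LEAST m. \<exists>T. finite T \<and> is_transversal P L T \<and> card T = m)"

datatype 'a pt = Pt 'a 'a | PtP | PtQ

definition cpoints :: "('a::ab_group_add) pt set" where
  "cpoints = {Pt h g | h g. g \<noteq> 0} \<union> {PtP, PtQ}"

definition line_L :: "'a::ab_group_add \<Rightarrow> 'a pt set" where
  "line_L g = {Pt h g | h. True}"

definition line_p :: "'a::ab_group_add \<Rightarrow> 'a pt set" where
  "line_p g = {Pt g h | h. h \<noteq> 0} \<union> {PtP}"

definition line_q :: "'a::ab_group_add \<Rightarrow> 'a pt set" where
  "line_q g = {Pt h (h + g) | h. h + g \<noteq> 0} \<union> {PtQ}"

definition clines :: "('a::ab_group_add) pt set set" where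
  "clines = {line_L g | g. g \<noteq> 0} \<union> {line_p g | g. True} \<union> {line_q g | g. True}"

end

theory Submission
  imports Defs "HOL-Library.Cardinality"
begin

fun fa :: "'a pt \<Rightarrow> 'a" where "fa (Pt a b) = a" | "fa PtP = undefined" | "fa PtQ = undefined"
fun sa :: "'a pt \<Rightarrow> 'a" where "sa (Pt a b) = b" | "sa PtP = undefined" | "sa PtQ = undefined"

lemma isPt: "x \<in> cpoints \<Longrightarrow> x \<noteq> PtP \<Longrightarrow> x \<noteq> PtQ \<Longrightarrow> x = Pt (fa x) (sa x) \<and> sa x \<noteq> 0"
  unfolding cpoints_def by auto

lemma lower:
  fixes T :: "('a::{ab_group_add,finite}) pt set"
  assumes sum0: "(\<Sum>g\<in>(UNIV :: 'a set). g) = 0"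
    and tr: "is_transversal cpoints clines T" and fin: "finite T"
  shows "card T \<ge> CARD('a) + 1"
proof (rule ccontr)
  assume "\<not> ?thesis"
  hence cT: "card T \<le> CARD('a)" by simp
  define G where "G = T - {PtP, PtQ}"
  have TP: "T \<subseteq> cpoints" and hit: "\<And>l. l \<in> clines \<Longrightarrow> T \<inter> l \<noteq> {}"
    using tr unfolding is_transversal_def by auto
  have finG: "finite G" using fin G_def by auto
  have Gpt: "\<And>x. x \<in> G \<Longrightarrow> x = Pt (fa x) (sa x) \<and> sa x \<noteq> 0"
    using TP isPt G_def by auto
  have C: "UNIV - {0} \<subseteq> sa ` G"
  proof
    fix g :: 'a assume "g \<in> UNIV - {0}"
    hence "line_L g \<in> clines" unfolding clines_def by auto
    then obtain x where "x \<in> T" "x \<in> line_L g" using hit by blast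
    thus "g \<in> sa ` G" unfolding line_L_def G_def by force
  qed
  have A: "PtP \<notin> T \<Longrightarrow> fa ` G = UNIV"
  proof -
    assume nP: "PtP \<notin> T"
    { fix g :: 'a
      have "line_p g \<in> clines" unfolding clines_def by auto
      then obtain x where "x \<in> T" "x \<in> line_p g" using hit by blast
      hence "g \<in> fa ` G" using nP unfolding line_p_def G_def by force }
    thus ?thesis by auto
  qed
  have B: "PtQ \<notin> T \<Longrightarrow> (\<lambda>x. sa x - fa x) ` G = UNIV"
  proof -
    assume nQ: "PtQ \<notin> T"
    { fix g :: 'a
      have "line_q g \<in> clines" unfolding clines_def by auto
      then obtain x where "x \<in> T" "x \<in> line_q g" using hit by blast
      hence "g \<in> (\<lambda>x. sa x - fa x) ` G" using nQ unfolding line_q_def G_def by force }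
    thus ?thesis by auto
  qed
  have cardC: "card (UNIV - {0::'a}) = CARD('a) - 1" by (simp add: card_Diff_singleton)
  have n1: "CARD('a) \<ge> 1" by (simp add: Suc_leI)
  have G1: "card G \<ge> CARD('a) - 1"
    using card_mono[OF finite_imageI[OF finG] C] card_image_le[OF finG, of sa] cardC by linarith
  have T_eq: "T = G \<union> (T \<inter> {PtP, PtQ})" using G_def by auto
  have cardT: "card T = card G + card (T \<inter> {PtP, PtQ})"
    by (subst T_eq, rule card_Un_disjoint) (use fin G_def in auto)
  show False
  proof (cases "PtP \<in> T")
    case True
    show False
    proof (cases "PtQ \<in> T")
      case True
      with \<open>PtP \<in> T\<close> have "card (T \<inter> {PtP, PtQ}) = 2" by (simp add: Int_absorb1)
      thus False using cardT G1 cT n1 by linarith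
    next
      case False
      have "card G \<ge> CARD('a)" using card_image_le[OF finG, of "\<lambda>x. sa x - fa x"] B[OF False] by simp
      moreover have "card (T \<inter> {PtP, PtQ}) \<ge> 1" using \<open>PtP \<in> T\<close>
        by (metis Int_iff card_0_eq finite_Int finite_insert empty_iff insertI1 less_one not_le finite.emptyI)
      ultimately show False using cardT cT by linarith
    qed
  next
    case nP: False
    have GA: "card G \<ge> CARD('a)" using card_image_le[OF finG, of fa] A[OF nP] by simp
    show False
    proof (cases "PtQ \<in> T")
      case True
      have "card (T \<inter> {PtP, PtQ}) \<ge> 1" using True
        by (metis Int_iff card_0_eq finite_Int finite_insert empty_iff insertI1 insertCI less_one not_le finite.emptyI)
      thus False using cardT cT GA by linarith
    next
      case nQ: False
      have cG: "card G = CARD('a)" using GA cardT cT by linarith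
      have injf: "inj_on fa G" by (rule eq_card_imp_inj_on[OF finG]) (simp add: A[OF nP] cG)
      have injd: "inj_on (\<lambda>x. sa x - fa x) G"
        by (rule eq_card_imp_inj_on[OF finG]) (simp add: B[OF nQ] cG)
      have sf: "sum fa G = 0"
        using sum.reindex[OF injf, of id] A[OF nP] sum0 by simp
      have sd: "sum (\<lambda>x. sa x - fa x) G = 0"
        using sum.reindex[OF injd, of id] B[OF nQ] sum0 by (simp add: comp_def)
      have ss: "sum sa G = 0"
      proof -
        have "sum sa G = sum (\<lambda>x. (sa x - fa x) + fa x) G" by simp
        also have "\<dots> = sum (\<lambda>x. sa x - fa x) G + sum fa G" by (rule sum.distrib)
        also have "\<dots> = 0" using sf sd by simp
        finally show ?thesis .
      qed
      have imS: "sa ` G = UNIV - {0}" using C Gpt by auto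
      have "\<not> inj_on sa G"
      proof
        assume "inj_on sa G"
        hence "card (sa ` G) = card G" by (rule card_image)
        moreover have "card (sa ` G) = CARD('a) - 1" by (simp only: imS cardC)
        ultimately show False using cG n1 by linarith
      qed
      then obtain x y where xy: "x \<in> G" "y \<in> G" "x \<noteq> y" "sa x = sa y"
        unfolding inj_on_def by blast
      have im2: "sa ` (G - {x}) = UNIV - {0}"
      proof -
        have "sa ` (G - {x}) = sa ` G" using xy by blast
        thus ?thesis using imS by simp
      qed
      have cx: "card (G - {x}) = CARD('a) - 1" using xy cG by simp
      have inj2: "inj_on sa (G - {x})"
        by (rule eq_card_imp_inj_on) (use finG im2 cx cardC in auto)
      have "sum sa (G - {x}) = sum id (UNIV - {0::'a})"
        using sum.reindex[OF inj2, of id] im2 by simp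
      also have "\<dots> = 0" using sum0 by (simp add: sum_diff1)
      finally have "sum sa (G - {x}) = 0" .
      moreover have "sum sa G = sa x + sum sa (G - {x})"
        using xy(1) finG by (simp add: sum.remove)
      ultimately have "sa x = 0" using ss by simp
      thus False using Gpt xy(1) by blast
    qed
  qed
qed

lemma upper:
  shows "is_transversal (cpoints :: ('a::{ab_group_add,finite}) pt set) clines
     ({PtP, PtQ} \<union> (\<lambda>g. Pt 0 g) ` (UNIV - {0}))"
   and "card ({PtP, PtQ} \<union> (\<lambda>g::'a. Pt 0 g) ` (UNIV - {0})) = CARD('a) + 1"
proof -
  show "is_transversal (cpoints :: 'a pt set) clines
     ({PtP, PtQ} \<union> (\<lambda>g. Pt 0 g) ` (UNIV - {0}))"
    unfolding is_transversal_def
  proof (intro conjI ballI)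
    show "{PtP, PtQ} \<union> (\<lambda>g. Pt 0 g) ` (UNIV - {0::'a}) \<subseteq> cpoints"
      unfolding cpoints_def by auto
  next
    fix l :: "'a pt set" assume "l \<in> clines"
    then consider g where "g \<noteq> 0" "l = line_L g" | g where "l = line_p g" | g where "l = line_q g"
      unfolding clines_def by blast
    then show "({PtP, PtQ} \<union> (\<lambda>g. Pt 0 g) ` (UNIV - {0::'a})) \<inter> l \<noteq> {}"
    proof cases
      case 1
      then have "Pt 0 g \<in> ({PtP, PtQ} \<union> (\<lambda>g. Pt 0 g) ` (UNIV - {0::'a})) \<inter> l"
        unfolding line_L_def by blast
      then show ?thesis by blast
    next
      case 2
      then have "PtP \<in> ({PtP, PtQ} \<union> (\<lambda>g. Pt 0 g) ` (UNIV - {0::'a})) \<inter> l"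
        unfolding line_p_def by blast
      then show ?thesis by blast
    next
      case 3
      then have "PtQ \<in> ({PtP, PtQ} \<union> (\<lambda>g. Pt 0 g) ` (UNIV - {0::'a})) \<inter> l"
        unfolding line_q_def by blast
      then show ?thesis by blast
    qed
  qed
  have inj: "inj_on (\<lambda>g::'a. Pt 0 g) (UNIV - {0})" by (auto simp: inj_on_def)
  have "card ({PtP, PtQ} \<union> (\<lambda>g::'a. Pt 0 g) ` (UNIV - {0}))
      = card {PtP, PtQ::'a pt} + card ((\<lambda>g::'a. Pt 0 g) ` (UNIV - {0}))"
    by (rule card_Un_disjoint) auto
  also have "\<dots> = 2 + (CARD('a) - 1)"
    using card_image[OF inj] by (simp add: card_Diff_singleton)
  also have "\<dots> = CARD('a) + 1" using Suc_leI[OF finite_UNIV_card_ge_0] by simp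
  finally show "card ({PtP, PtQ} \<union> (\<lambda>g::'a. Pt 0 g) ` (UNIV - {0})) = CARD('a) + 1" .
qed

theorem proposition3p1:
  fixes k :: nat
  assumes "k > 0"
    and "card (UNIV :: ('a::{ab_group_add,finite}) set) = 2 * k + 1"
    and "(\<Sum>g\<in>(UNIV :: 'a set). g) = 0"
    and "\<forall>g :: 'a. g \<noteq> 0 \<longrightarrow> g + g \<noteq> 0"
  shows "tau (cpoints :: 'a pt set) clines = 2 * k + 2"
proof -
  have "tau (cpoints :: 'a pt set) clines = CARD('a) + 1"
    unfolding tau_def
  proof (rule Least_equality)
    show "\<exists>T. finite T \<and> is_transversal (cpoints :: 'a pt set) clines T \<and> card T = CARD('a) + 1"
    proof (intro exI conjI)
      show "finite ({PtP, PtQ} \<union> (\<lambda>g::'a. Pt 0 g) ` (UNIV - {0}))" by simp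
    qed (rule upper(1), rule upper(2))
  next
    fix m assume "\<exists>T. finite T \<and> is_transversal (cpoints :: 'a pt set) clines T \<and> card T = m"
    then obtain T :: "'a pt set" where "finite T" "is_transversal cpoints clines T" "card T = m" by blast
    thus "CARD('a) + 1 \<le> m" using lower[OF assms(3), of T] by simp
  qed
  thus ?thesis using assms(2) by simp
qed

end
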